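(* Let $k$ be a positive integer. If $G$ is an $(A,U,B)$-structure graph (with respect to $k$), then $G$ is $k$-placeable.
   Context: All graphs are finite and simple. For a graph $H$ on $m$ vertices, a $k$-placement of $H$ (in $K_m$) is a $k$-tuple $(\phi_1,\dots,\phi_k)$ of bijections $\phi_i:V(H)\to V(K_m)$ such that the edge sets $\phi_i(E(H))=\{\phi_i(x)\phi_i(y):xy\in E(H)\}$ are pairwise disjoint; $H$ is $k$-placeable if it has one. A vertex $v$ is $k$-placed if $\phi_i(v)\neq\phi_j(v)$ for all $i\ne j$, and $k$-fixed if $\phi_i(v)=\phi_j(v)$ for all $i,j$. $N_G(X)$ denotes the set of vertices outside $X$ adjacent to some vertex of $X$, and $N_A(u)$ the set of neighbours of $u$ in $V(A)$. Definition: let $A,B$ be vertex-disjoint induced subgraphs of $G$ and let $U\subseteq V(G)$ be an independent set (possibly empty) such that either $V(A),V(B),U$ is a partition of $V(G)$, or $V(A),V(B)$ is a partition of $V(G)$ with $U\subseteq V(A)$ or $U\subseteq V(B)$. $G$ is an $(A,U,B)$-structure graph if (i) at most one vertex $a\in V(A)\setminus U$ has neighbours in $V(B)\setminus U$, and for each $u\in U$ we have $|N_A(u)|\le 1$ if $U\cap V(A)=\emptyset$ and $|N_B(u)|\le1$ if $U\cap V(B)=\emptyset$; and (ii) each of $A$ and $B$ has a $k$-placement (in $K_{|V(A)|}$, resp. $K_{|V(B)|}$) such that the vertices of $N_G(U)$ and the vertex $a$ are $k$-placed and each vertex of $U$ is $k$-fixed (when $U$ is disjoint from $V(A)\cup V(B)$,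 $U$ is placed on its own $|U|$ vertices with each vertex $k$-fixed). *)

theory Defs
  imports Main
begin

definition simple_graph :: "'a set \<Rightarrow> 'a set set \<Rightarrow> bool" where
  "simple_graph V E \<longleftrightarrow> finite V \<and>
     (\<forall>e\<in>E. \<exists>x y. e = {x, y} \<and> x \<noteq> y \<and> x \<in> V \<and> y \<in> V)"

definition induced_edges :: "'a set set \<Rightarrow> 'a set \<Rightarrow> 'a set set" where
  "induced_edges E S = {e \<in> E. e \<subseteq> S}"

definition edge_image :: "('a \<Rightarrow> 'b) \<Rightarrow> 'a set set \<Rightarrow> 'b set set" where
  "edge_image f E = {{f x, f y} | x y. {x, y} \<in> E}"

text \<open>A k-placement of the graph (V,E) in the complete graph on the vertex set W
  (with |W| = |V|): k bijections V \<rightarrow> W (indexed by i < k) whose edge images are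
  pairwise disjoint.\<close>
definition placement_in ::
  "nat \<Rightarrow> 'a set \<Rightarrow> 'a set set \<Rightarrow> 'b set \<Rightarrow> (nat \<Rightarrow> 'a \<Rightarrow> 'b) \<Rightarrow> bool" where
  "placement_in k V E W \<phi> \<longleftrightarrow>
     (\<forall>i<k. bij_betw (\<phi> i) V W) \<and>
     (\<forall>i<k. \<forall>j<k. i \<noteq> j \<longrightarrow> edge_image (\<phi> i) E \<inter> edge_image (\<phi> j) E = {})"

text \<open>A k-placement of H in K_{|V(H)|}; we take V(H) itself as vertex set of the
  complete graph.\<close>
definition placement :: "nat \<Rightarrow> 'a set \<Rightarrow> 'a set set \<Rightarrow> (nat \<Rightarrow> 'a \<Rightarrow> 'a) \<Rightarrow> bool" where
  "placement k V E \<phi> \<longleftrightarrow> placement_in k V E V \<phi>"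

definition placeable :: "nat \<Rightarrow> 'a set \<Rightarrow> 'a set set \<Rightarrow> bool" where
  "placeable k V E \<longleftrightarrow> (\<exists>\<phi>. placement k V E \<phi>)"

definition k_placed :: "nat \<Rightarrow> (nat \<Rightarrow> 'a \<Rightarrow> 'b) \<Rightarrow> 'a \<Rightarrow> bool" where
  "k_placed k \<phi> v \<longleftrightarrow> (\<forall>i<k. \<forall>j<k. i \<noteq> j \<longrightarrow> \<phi> i v \<noteq> \<phi> j v)"

definition k_fixed :: "nat \<Rightarrow> (nat \<Rightarrow> 'a \<Rightarrow> 'b) \<Rightarrow> 'a \<Rightarrow> bool" where
  "k_fixed k \<phi> v \<longleftrightarrow> (\<forall>i<k. \<forall>j<k. \<phi> i v = \<phi> j v)"

definition adj :: "'a set set \<Rightarrow> 'a \<Rightarrow> 'a \<Rightarrow> bool" where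
  "adj E x y \<longleftrightarrow> {x, y} \<in> E"

definition nbhd_set :: "'a set \<Rightarrow> 'a set set \<Rightarrow> 'a set \<Rightarrow> 'a set" where
  "nbhd_set V E X = {v \<in> V - X. \<exists>x\<in>X. adj E v x}"

definition nbrs_in :: "'a set set \<Rightarrow> 'a set \<Rightarrow> 'a \<Rightarrow> 'a set" where
  "nbrs_in E S u = {v \<in> S. adj E u v}"

definition independent :: "'a set \<Rightarrow> 'a set set \<Rightarrow> 'a set \<Rightarrow> bool" where
  "independent V E U \<longleftrightarrow> U \<subseteq> V \<and> (\<forall>x\<in>U. \<forall>y\<in>U. \<not> adj E x y)"

text \<open>The induced subgraphs A, B are
  given by their vertex sets VA, VB. The vertex a is a vertex such that every vertex
  of VA - U having a neighbour in VB - U equals a ("at most one such vertex");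
  it is required to be k-placed in the placement of A (when it lies in VA).\<close>
definition structure_graph ::
  "nat \<Rightarrow> 'a set \<Rightarrow> 'a set set \<Rightarrow> 'a set \<Rightarrow> 'a set \<Rightarrow> 'a set \<Rightarrow> bool" where
  "structure_graph k V E VA U VB \<longleftrightarrow>
     VA \<subseteq> V \<and> VB \<subseteq> V \<and> VA \<inter> VB = {} \<and> independent V E U \<and>
     ((VA \<union> VB \<union> U = V \<and> U \<inter> VA = {} \<and> U \<inter> VB = {}) \<or>
      (VA \<union> VB = V \<and> (U \<subseteq> VA \<or> U \<subseteq> VB))) \<and>
     (\<exists>a.
        (\<forall>v\<in>VA - U. (\<exists>w\<in>VB - U. adj E v w) \<longrightarrow> v = a) \<and>
        (\<forall>u\<in>U. (U \<inter> VA = {} \<longrightarrow> card (nbrs_in E VA u) \<le> 1) \<and>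
                (U \<inter> VB = {} \<longrightarrow> card (nbrs_in E VB u) \<le> 1)) \<and>
        (\<exists>\<phi>. placement k VA (induced_edges E VA) \<phi> \<and>
             (\<forall>v\<in>VA. (v \<in> nbhd_set V E U \<or> v = a) \<longrightarrow> k_placed k \<phi> v) \<and>
             (\<forall>v\<in>VA \<inter> U. k_fixed k \<phi> v)) \<and>
        (\<exists>\<psi>. placement k VB (induced_edges E VB) \<psi> \<and>
             (\<forall>v\<in>VB. v \<in> nbhd_set V E U \<longrightarrow> k_placed k \<psi> v) \<and>
             (\<forall>v\<in>VB \<inter> U. k_fixed k \<psi> v)))"

end

theory Submission
  imports Defs
begin

theorem mainTheorem3:
  fixes k :: nat and V :: "'a set" and E :: "'a set set" and VA U VB :: "'a set"
  assumes "k \<ge> 1"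
    and "simple_graph V E"
    and "structure_graph k V E VA U VB"
  shows "placeable k V E"
proof -
  have sg: "finite V" "\<And>e. e \<in> E \<Longrightarrow> \<exists>x y. e = {x, y} \<and> x \<noteq> y \<and> x \<in> V \<and> y \<in> V"
    using assms(2) unfolding simple_graph_def by auto
  have VAs: "VA \<subseteq> V" and VBs: "VB \<subseteq> V" and dAB: "VA \<inter> VB = {}"
    and ind: "independent V E U"
    and cs: "(VA \<union> VB \<union> U = V \<and> U \<inter> VA = {} \<and> U \<inter> VB = {}) \<or>
      (VA \<union> VB = V \<and> (U \<subseteq> VA \<or> U \<subseteq> VB))"
    using assms(3) unfolding structure_graph_def by auto
  obtain a \<phi> \<psi> where
    aP: "\<forall>v\<in>VA - U. (\<exists>w\<in>VB - U. adj E v w) \<longrightarrow> v = a" and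
    nb: "\<forall>u\<in>U. (U \<inter> VA = {} \<longrightarrow> card (nbrs_in E VA u) \<le> 1) \<and>
                (U \<inter> VB = {} \<longrightarrow> card (nbrs_in E VB u) \<le> 1)" and
    pA: "placement k VA (induced_edges E VA) \<phi>" and
    plA: "\<forall>v\<in>VA. (v \<in> nbhd_set V E U \<or> v = a) \<longrightarrow> k_placed k \<phi> v" and
    fA: "\<forall>v\<in>VA \<inter> U. k_fixed k \<phi> v" and
    pB: "placement k VB (induced_edges E VB) \<psi>" and
    plB: "\<forall>v\<in>VB. v \<in> nbhd_set V E U \<longrightarrow> k_placed k \<psi> v" and
    fB: "\<forall>v\<in>VB \<inter> U. k_fixed k \<psi> v"
    using assms(3) unfolding structure_graph_def
    apply (elim conjE exE)
    apply (rule that)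
    apply assumption+
    done
  have UV: "U \<subseteq> V" and indU: "\<And>x y. x \<in> U \<Longrightarrow> y \<in> U \<Longrightarrow> \<not> adj E x y"
    using ind unfolding independent_def by auto
  have Vcov: "V \<subseteq> VA \<union> VB \<union> U" using cs by blast
  have UA: "\<And>x. x \<in> U \<Longrightarrow> x \<notin> VA \<Longrightarrow> U \<inter> VA = {}" using cs dAB by blast
  have UB: "\<And>x. x \<in> U \<Longrightarrow> x \<notin> VB \<Longrightarrow> U \<inter> VB = {}" using cs dAB by blast
  have bA: "\<And>i. i < k \<Longrightarrow> bij_betw (\<phi> i) VA VA" using pA
    unfolding placement_def placement_in_def by blast
  have bB: "\<And>i. i < k \<Longrightarrow> bij_betw (\<psi> i) VB VB" using pB
    unfolding placement_def placement_in_def by blast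
  have dA: "\<And>i j. i < k \<Longrightarrow> j < k \<Longrightarrow> i \<noteq> j \<Longrightarrow>
      edge_image (\<phi> i) (induced_edges E VA) \<inter> edge_image (\<phi> j) (induced_edges E VA) = {}"
    using pA unfolding placement_def placement_in_def by blast
  have dB: "\<And>i j. i < k \<Longrightarrow> j < k \<Longrightarrow> i \<noteq> j \<Longrightarrow>
      edge_image (\<psi> i) (induced_edges E VB) \<inter> edge_image (\<psi> j) (induced_edges E VB) = {}"
    using pB unfolding placement_def placement_in_def by blast
  define \<sigma> where "\<sigma> i x = (if x \<in> VA then \<phi> i x else if x \<in> VB then \<psi> i x else x)" for i x
  have S1: "bij_betw (\<sigma> i) V V" if "i < k" for i
  proof -
    have 1: "bij_betw (\<sigma> i) VA VA"
      using bA[OF that] by (rule bij_betw_cong[THEN iffD1, rotated]) (simp add: \<sigma>_def)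
    have 2: "bij_betw (\<sigma> i) VB VB"
      using bB[OF that] by (rule bij_betw_cong[THEN iffD1, rotated]) (use dAB in \<open>auto simp: \<sigma>_def\<close>)
    have 3: "bij_betw (\<sigma> i) (V - VA - VB) (V - VA - VB)"
      by (rule bij_betw_cong[THEN iffD1, OF _ bij_betw_id]) (simp add: \<sigma>_def)
    have "bij_betw (\<sigma> i) (VA \<union> VB \<union> (V - VA - VB)) (VA \<union> VB \<union> (V - VA - VB))"
      by (rule bij_betw_combine[OF bij_betw_combine[OF 1 2] 3]) (use dAB in auto)
    moreover have "VA \<union> VB \<union> (V - VA - VB) = V" using VAs VBs by blast
    ultimately show ?thesis by simp
  qed
  have inj: "\<And>i x y. i < k \<Longrightarrow> x \<in> V \<Longrightarrow> y \<in> V \<Longrightarrow> \<sigma> i x = \<sigma> i y \<Longrightarrow> x = y"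
    using S1 by (meson bij_betw_imp_inj_on inj_onD)
  have S2A: "\<And>i x. i < k \<Longrightarrow> x \<in> V \<Longrightarrow> \<sigma> i x \<in> VA \<longleftrightarrow> x \<in> VA"
  proof -
    fix i x assume i: "i < k" and x: "x \<in> V"
    show "\<sigma> i x \<in> VA \<longleftrightarrow> x \<in> VA"
      using bij_betwE[OF bA[OF i]] bij_betwE[OF bB[OF i]] dAB
      by (auto simp: \<sigma>_def)
  qed
  have S2B: "\<And>i x. i < k \<Longrightarrow> x \<in> V \<Longrightarrow> \<sigma> i x \<in> VB \<longleftrightarrow> x \<in> VB"
  proof -
    fix i x assume i: "i < k" and x: "x \<in> V"
    show "\<sigma> i x \<in> VB \<longleftrightarrow> x \<in> VB"
      using bij_betwE[OF bA[OF i]] bij_betwE[OF bB[OF i]] dAB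
      by (auto simp: \<sigma>_def)
  qed
  have S3: "\<And>i j x. i < k \<Longrightarrow> j < k \<Longrightarrow> x \<in> U \<Longrightarrow> \<sigma> i x = \<sigma> j x"
  proof -
    fix i j x assume h: "i < k" "j < k" "x \<in> U"
    show "\<sigma> i x = \<sigma> j x"
    proof (cases "x \<in> VA")
      case True
      then have "k_fixed k \<phi> x" using fA h by blast
      then have "\<phi> i x = \<phi> j x" using h unfolding k_fixed_def by blast
      then show ?thesis using True unfolding \<sigma>_def by simp
    next
      case nA: False
      show ?thesis
      proof (cases "x \<in> VB")
        case True
        then have "k_fixed k \<psi> x" using fB h by blast
        then have "\<psi> i x = \<psi> j x" using h unfolding k_fixed_def by blast
        then show ?thesis using True nA unfolding \<sigma>_def by simp
      next
        case False
        then show ?thesis using nA unfolding \<sigma>_def by simp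
      qed
    qed
  qed
  have S4: "\<And>i j x u. i < k \<Longrightarrow> j < k \<Longrightarrow> i \<noteq> j \<Longrightarrow> x \<in> V \<Longrightarrow> x \<notin> U \<Longrightarrow> u \<in> U
      \<Longrightarrow> adj E x u \<Longrightarrow> \<sigma> i x \<noteq> \<sigma> j x"
  proof -
    fix i j x u assume h: "i < k" "j < k" "i \<noteq> j" "x \<in> V" "x \<notin> U" "u \<in> U" "adj E x u"
    have nx: "x \<in> nbhd_set V E U" using h unfolding nbhd_set_def by auto
    have "x \<in> VA \<or> x \<in> VB" using h Vcov by blast
    then show "\<sigma> i x \<noteq> \<sigma> j x"
    proof
      assume xa: "x \<in> VA" then have "k_placed k \<phi> x" using plA nx by blast
      then have "\<phi> i x \<noteq> \<phi> j x" using h unfolding k_placed_def by blast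
      then show ?thesis using xa unfolding \<sigma>_def by simp
    next
      assume xb: "x \<in> VB" then have "x \<notin> VA" using dAB by blast
      moreover have "k_placed k \<psi> x" using plB nx xb by blast
      moreover have "\<psi> i x \<noteq> \<psi> j x" using h calculation(2) unfolding k_placed_def by blast
      ultimately show ?thesis using xb unfolding \<sigma>_def by simp
    qed
  qed
  have S5: "\<And>i j. i < k \<Longrightarrow> j < k \<Longrightarrow> i \<noteq> j \<Longrightarrow> a \<in> VA \<Longrightarrow> \<sigma> i a \<noteq> \<sigma> j a"
  proof -
    fix i j assume h: "i < k" "j < k" "i \<noteq> j" "a \<in> VA"
    then have "\<phi> i a \<noteq> \<phi> j a" using plA unfolding k_placed_def by blast
    then show "\<sigma> i a \<noteq> \<sigma> j a" using h unfolding \<sigma>_def by simp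
  qed
  have S6: "\<And>x y. {x, y} \<in> E \<Longrightarrow> x \<in> V \<and> y \<in> V \<and> x \<noteq> y"
  proof -
    fix x y assume "{x, y} \<in> E"
    then obtain x0 y0 where "{x, y} = {x0, y0}" "x0 \<noteq> y0" "x0 \<in> V" "y0 \<in> V" using sg(2) by blast
    then show "x \<in> V \<and> y \<in> V \<and> x \<noteq> y" by (auto simp: doubleton_eq_iff)
  qed
  have EI: "\<And>a b F f. {a, b} \<in> F \<Longrightarrow> {f a, f b} \<in> edge_image f F"
    unfolding edge_image_def by blast
  have S7A: "\<And>i j x y x' y'. i < k \<Longrightarrow> j < k \<Longrightarrow> i \<noteq> j \<Longrightarrow> x \<in> VA \<Longrightarrow> y \<in> VA \<Longrightarrow>
     x' \<in> VA \<Longrightarrow> y' \<in> VA \<Longrightarrow> {x, y} \<in> E \<Longrightarrow> {x', y'} \<in> E \<Longrightarrow>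
     \<phi> i x = \<phi> j x' \<Longrightarrow> \<phi> i y = \<phi> j y' \<Longrightarrow> False"
  proof -
    fix i j x y x' y' assume h: "i < k" "j < k" "i \<noteq> j" "x \<in> VA" "y \<in> VA"
     "x' \<in> VA" "y' \<in> VA" "{x, y} \<in> E" "{x', y'} \<in> E" "\<phi> i x = \<phi> j x'" "\<phi> i y = \<phi> j y'"
    have e1: "{x, y} \<in> induced_edges E VA" "{x', y'} \<in> induced_edges E VA"
      using h by (auto simp: induced_edges_def)
    have "{\<phi> i x, \<phi> i y} \<in> edge_image (\<phi> i) (induced_edges E VA)"
      using EI[OF e1(1)] .
    moreover have "{\<phi> i x, \<phi> i y} \<in> edge_image (\<phi> j) (induced_edges E VA)"
      using EI[OF e1(2), of "\<phi> j"] h by simp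
    ultimately show False using dA[OF h(1-3)] by blast
  qed
  have S7B: "\<And>i j x y x' y'. i < k \<Longrightarrow> j < k \<Longrightarrow> i \<noteq> j \<Longrightarrow> x \<in> VB \<Longrightarrow> y \<in> VB \<Longrightarrow>
     x' \<in> VB \<Longrightarrow> y' \<in> VB \<Longrightarrow> {x, y} \<in> E \<Longrightarrow> {x', y'} \<in> E \<Longrightarrow>
     \<psi> i x = \<psi> j x' \<Longrightarrow> \<psi> i y = \<psi> j y' \<Longrightarrow> False"
  proof -
    fix i j x y x' y' assume h: "i < k" "j < k" "i \<noteq> j" "x \<in> VB" "y \<in> VB"
     "x' \<in> VB" "y' \<in> VB" "{x, y} \<in> E" "{x', y'} \<in> E" "\<psi> i x = \<psi> j x'" "\<psi> i y = \<psi> j y'"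
    have e1: "{x, y} \<in> induced_edges E VB" "{x', y'} \<in> induced_edges E VB"
      using h by (auto simp: induced_edges_def)
    have "{\<psi> i x, \<psi> i y} \<in> edge_image (\<psi> i) (induced_edges E VB)"
      using EI[OF e1(1)] .
    moreover have "{\<psi> i x, \<psi> i y} \<in> edge_image (\<psi> j) (induced_edges E VB)"
      using EI[OF e1(2), of "\<psi> j"] h by simp
    ultimately show False using dB[OF h(1-3)] by blast
  qed
  have S8A: "\<And>u x x'. u \<in> U \<Longrightarrow> U \<inter> VA = {} \<Longrightarrow> x \<in> VA \<Longrightarrow> x' \<in> VA \<Longrightarrow> adj E u x \<Longrightarrow> adj E u x' \<Longrightarrow> x = x'"
  proof -
    fix u x x' assume h: "u \<in> U" "U \<inter> VA = {}" "x \<in> VA" "x' \<in> VA" "adj E u x" "adj E u x'"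
    have c: "card (nbrs_in E VA u) \<le> 1" using nb h by blast
    have f: "finite (nbrs_in E VA u)" using sg(1) VAs unfolding nbrs_in_def
      by (metis (no_types, lifting) finite_subset mem_Collect_eq subsetI)
    have "x \<in> nbrs_in E VA u" "x' \<in> nbrs_in E VA u" using h unfolding nbrs_in_def by auto
    then show "x = x'" using c f by (metis card_le_Suc0_iff_eq One_nat_def)
  qed
  have S8B: "\<And>u x x'. u \<in> U \<Longrightarrow> U \<inter> VB = {} \<Longrightarrow> x \<in> VB \<Longrightarrow> x' \<in> VB \<Longrightarrow> adj E u x \<Longrightarrow> adj E u x' \<Longrightarrow> x = x'"
  proof -
    fix u x x' assume h: "u \<in> U" "U \<inter> VB = {}" "x \<in> VB" "x' \<in> VB" "adj E u x" "adj E u x'"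
    have c: "card (nbrs_in E VB u) \<le> 1" using nb h by blast
    have f: "finite (nbrs_in E VB u)" using sg(1) VBs unfolding nbrs_in_def
      by (metis (no_types, lifting) finite_subset mem_Collect_eq subsetI)
    have "x \<in> nbrs_in E VB u" "x' \<in> nbrs_in E VB u" using h unfolding nbrs_in_def by auto
    then show "x = x'" using c f by (metis card_le_Suc0_iff_eq One_nat_def)
  qed
  have adjs: "\<And>x y. adj E x y = adj E y x" unfolding adj_def by (simp add: insert_commute)
  have C: "False" if h: "i < k" "j < k" "i \<noteq> j" "{x, y} \<in> E" "{x', y'} \<in> E"
      "\<sigma> i x = \<sigma> j x'" "\<sigma> i y = \<sigma> j y'" for i j x y x' y'
  proof -
    have V: "x \<in> V" "y \<in> V" "x' \<in> V" "y' \<in> V" "x \<noteq> y" using S6 h(4,5) by auto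
    have axy: "adj E x y" "adj E x' y'" using h(4,5) unfolding adj_def by auto
    have ex: "x = x'" if "x \<in> U \<or> x' \<in> U"
      using that S3[OF h(1,2)] S3[OF h(2,1)] h(6) inj[OF h(1)] inj[OF h(2)] V UV by metis
    have ey: "y = y'" if "y \<in> U \<or> y' \<in> U"
      using that S3[OF h(1,2)] S3[OF h(2,1)] h(7) inj[OF h(1)] inj[OF h(2)] V UV by metis
    have pA1: "x \<in> VA \<longleftrightarrow> x' \<in> VA" using S2A[OF h(1) V(1)] S2A[OF h(2) V(3)] h(6) by simp
    have pA2: "y \<in> VA \<longleftrightarrow> y' \<in> VA" using S2A[OF h(1) V(2)] S2A[OF h(2) V(4)] h(7) by simp
    have pB1: "x \<in> VB \<longleftrightarrow> x' \<in> VB" using S2B[OF h(1) V(1)] S2B[OF h(2) V(3)] h(6) by simp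
    have pB2: "y \<in> VB \<longleftrightarrow> y' \<in> VB" using S2B[OF h(1) V(2)] S2B[OF h(2) V(4)] h(7) by simp
    show False
    proof (cases "x \<in> VA \<and> y \<in> VA")
      case True
      then show ?thesis using S7A[OF h(1-3) _ _ _ _ h(4,5)] h(6,7) pA1 pA2 unfolding \<sigma>_def by auto
    next
      case nAA: False
      show ?thesis
      proof (cases "x \<in> VB \<and> y \<in> VB")
        case True
        then have "x \<notin> VA" "y \<notin> VA" "x' \<notin> VA" "y' \<notin> VA" using dAB pB1 pB2 by auto
        then show ?thesis using True S7B[OF h(1-3) _ _ _ _ h(4,5)] h(6,7) pB1 pB2 unfolding \<sigma>_def by auto
      next
        case nBB: False
        show ?thesis
        proof (cases "x \<in> U \<or> x' \<in> U")
          case True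
          have xx: "x = x'" using ex True by blast
          with True have xU: "x \<in> U" by blast
          have yU: "y \<notin> U" using indU xU axy by blast
          have "y \<in> VA \<or> y \<in> VB" using yU V Vcov by blast
          then show ?thesis
          proof
            assume yA: "y \<in> VA"
            then have "x \<notin> VA" using nAA by blast
            then have "U \<inter> VA = {}" using UA xU by blast
            then have "y = y'" using S8A[OF xU _ yA] pA2 yA axy xx adjs by blast
            then show ?thesis using S4[OF h(1-3) V(2) yU xU] axy adjs h(7) by metis
          next
            assume yB: "y \<in> VB"
            then have "x \<notin> VB" using nBB by blast
            then have "U \<inter> VB = {}" using UB xU by blast
            then have "y = y'" using S8B[OF xU _ yB] pB2 yB axy xx adjs by blast
            then show ?thesis using S4[OF h(1-3) V(2) yU xU] axy adjs h(7) by metis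
          qed
        next
          case nxU: False
          show ?thesis
          proof (cases "y \<in> U \<or> y' \<in> U")
            case True
            have yy: "y = y'" using ey True by blast
            with True have yU: "y \<in> U" by blast
            have xU: "x \<notin> U" using nxU by blast
            have "x \<in> VA \<or> x \<in> VB" using xU V Vcov by blast
            then show ?thesis
            proof
              assume xA: "x \<in> VA"
              then have "y \<notin> VA" using nAA by blast
              then have "U \<inter> VA = {}" using UA yU by blast
              then have "x = x'" using S8A[OF yU _ xA] pA1 xA axy yy adjs by blast
              then show ?thesis using S4[OF h(1-3) V(1) xU yU] axy h(6) by metis
            next
              assume xB: "x \<in> VB"
              then have "y \<notin> VB" using nBB by blast
              then have "U \<inter> VB = {}" using UB yU by blast
              then have "x = x'" using S8B[OF yU _ xB] pB1 xB axy yy adjs by blast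
              then show ?thesis using S4[OF h(1-3) V(1) xU yU] axy h(6) by metis
            qed
          next
            case nyU: False
            have cov: "x \<in> VA \<or> x \<in> VB" "y \<in> VA \<or> y \<in> VB" using nxU nyU V Vcov by blast+
            show ?thesis
            proof (cases "x \<in> VA")
              case True
              then have yB: "y \<in> VB" "y' \<in> VB" using cov nAA pB2 by auto
              have "x = a" using aP True nxU nyU yB axy by blast
              moreover have "x' = a" using aP True pA1 nxU nyU yB axy by blast
              ultimately show ?thesis using S5[OF h(1-3)] True h(6) by metis
            next
              case False
              then have xB: "x \<in> VB" "x' \<in> VB" and yA: "y \<in> VA" "y' \<in> VA"
                using cov nBB pB1 pA2 by auto
              have "y = a" using aP yA nxU nyU xB axy adjs by blast
              moreover have "y' = a" using aP yA nxU nyU xB axy adjs by blast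
              ultimately show ?thesis using S5[OF h(1-3)] yA h(7) by metis
            qed
          qed
        qed
      qed
    qed
  qed
  have "placement k V E \<sigma>"
    unfolding placement_def placement_in_def
  proof (intro conjI allI impI)
    fix i assume "i < k" then show "bij_betw (\<sigma> i) V V" by (rule S1)
  next
    fix i j assume h: "i < k" "j < k" "i \<noteq> j"
    show "edge_image (\<sigma> i) E \<inter> edge_image (\<sigma> j) E = {}"
    proof (rule ccontr)
      assume "edge_image (\<sigma> i) E \<inter> edge_image (\<sigma> j) E \<noteq> {}"
      then obtain x y x' y' where e: "{x, y} \<in> E" "{x', y'} \<in> E"
        "{\<sigma> i x, \<sigma> i y} = {\<sigma> j x', \<sigma> j y'}"
        unfolding edge_image_def by blast
      have e': "{y', x'} \<in> E" using e(2) by (simp add: insert_commute)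
      from e(3) show False
        unfolding doubleton_eq_iff
        using C[OF h e(1) e(2)] C[OF h e(1) e'] by blast
    qed
  qed
  then show ?thesis unfolding placeable_def by blast
qed

end
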